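(* Let $q>0$. Then the function $\mathcal{E}_q^z$ is analytic in the disc $|z|<R_q$, where $$R_q=\begin{cases}\dfrac{2}{1-q}, & 0<q<1,\\[1ex] \dfrac{2q}{q-1}, & q>1,\\[1ex] \infty, & q=1,\end{cases}$$ and for $|z|<R_q$ $$\mathcal{E}_q^z=\sum_{n=0}^\infty \frac{z^n}{\{n\}!},$$ where, for $q\neq1$, $\{n\}:=\dfrac{1+q+\dots+q^{n-1}}{\frac12(1+q^{n-1})}=\dfrac{2(1-q^n)}{(1-q)(1+q^{n-1})}$ (and $\{n\}:=n$ for $q=1$), and $\{n\}!:=\{1\}\{2\}\cdots\{n\}$, $\{0\}!:=1$.
   Context: For $q>0$ and integers $k\ge1$ let $[k]=1+q+\dots+q^{k-1}$, $[n]!=[1][2]\cdots[n]$, $[0]!=1$. The standard $q$-exponentials are $e_q^z=\sum_{n\ge0} z^n/[n]!$ and $E_q^z=\sum_{n\ge0} q^{n(n-1)/2}z^n/[n]!$, defined by these power series on their discs of convergence and extended meromorphically to $\mathbb{C}$; for $0<q<1$ one has $e_q^z=\prod_{k\ge0}(1-(1-q)q^kz)^{-1}$ and $E_q^z=\prod_{k\ge0}(1+(1-q)q^kz)$, and in general $E_q^z=e_{1/q}^z$; for $q=1$ both equal $e^z$. The improved $q$-exponential is $\mathcal{E}_q^z:=e_q^{z/2}E_q^{z/2}$ (a meromorphic function of $z$); for $0<q<1$, $\mathcal{E}_q^z=\prod_{k\ge0}\frac{1+q^k(1-q)\frac z2}{1-q^k(1-q)\frac z2}$. *)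

theory Defs
  imports "HOL-Analysis.Analysis"
begin

definition qint :: "real \<Rightarrow> nat \<Rightarrow> real" where
  "qint q k = (\<Sum>i<k. q ^ i)"

definition qfact :: "real \<Rightarrow> nat \<Rightarrow> real" where
  "qfact q n = (\<Prod>k\<in>{1..n}. qint q k)"

text \<open>e_q^z as its power series (on its disc of convergence)\<close>
definition e_q :: "real \<Rightarrow> complex \<Rightarrow> complex" where
  "e_q q z = (\<Sum>n. z ^ n / complex_of_real (qfact q n))"

text \<open>E_q^z as its power series (on its disc of convergence)\<close>
definition E_q :: "real \<Rightarrow> complex \<Rightarrow> complex" where
  "E_q q z = (\<Sum>n. complex_of_real (q ^ (n * (n - 1) div 2)) * z ^ n / complex_of_real (qfact q n))"

text \<open>improved q-exponential: e_q^(z/2) E_q^(z/2)\<close>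
definition impexp :: "real \<Rightarrow> complex \<Rightarrow> complex" where
  "impexp q z = e_q q (z / 2) * E_q q (z / 2)"

definition qbrace :: "real \<Rightarrow> nat \<Rightarrow> real" where
  "qbrace q n = (if q = 1 then real n else qint q n / ((1 + q ^ (n - 1)) / 2))"

definition qbrace_fact :: "real \<Rightarrow> nat \<Rightarrow> real" where
  "qbrace_fact q n = (\<Prod>k\<in>{1..n}. qbrace q k)"

definition disc_q :: "real \<Rightarrow> complex set" where
  "disc_q q = (if q = 1 then UNIV
               else if q < 1 then ball 0 (2 / (1 - q))
               else ball 0 (2 * q / (q - 1)))"

end

theory Submission imports Defs begin

lemma qint_0[simp]: "qint q 0 = 0" by (simp add: qint_def)
lemma qint_Suc: "qint q (Suc n) = qint q n + q ^ n" by (simp add: qint_def)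
lemma qint_Suc': "qint q (Suc n) = 1 + q * qint q n"
  unfolding qint_def sum.lessThan_Suc_shift by (simp add: sum_distrib_left)
lemma qint_pos: "q > 0 \<Longrightarrow> k \<ge> 1 \<Longrightarrow> qint q k > 0"
proof (induction k)
  case (Suc k) then show ?case by (cases "k = 0") (auto simp: qint_Suc add_pos_pos)
qed simp
lemma qint_ge: "q \<ge> 1 \<Longrightarrow> qint q k \<ge> real k"
proof (induction k)
  case (Suc k)
  have "1 \<le> q ^ k" using Suc.prems by (rule one_le_power)
  then show ?case using Suc.IH[OF Suc.prems] unfolding qint_Suc of_nat_Suc by linarith
qed simp
lemma qint_add: "qint q (k + d) = qint q k + q ^ k * qint q d"
  by (induction d) (auto simp: qint_Suc power_add algebra_simps)
lemma qint_geom: "q \<noteq> 1 \<Longrightarrow> qint q n = (1 - q ^ n) / (1 - q)"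
  unfolding qint_def by (metis sum_gp_strict)

lemma qfact_0[simp]: "qfact q 0 = 1" by (simp add: qfact_def)
lemma qfact_Suc: "qfact q (Suc n) = qfact q n * qint q (Suc n)"
  by (simp add: qfact_def prod.nat_ivl_Suc' mult.commute)
lemma qfact_pos: "q > 0 \<Longrightarrow> qfact q n > 0"
  by (induction n) (auto simp: qfact_Suc qint_pos)

lemma C_Suc: "Suc n * n div 2 = n * (n - 1) div 2 + n"
proof -
  have "Suc n * n = n * (n - 1) + 2 * n" by (cases n) (auto simp: algebra_simps)
  then show ?thesis by simp
qed

lemma C_pow: "q ^ (Suc j * (Suc j - 1) div 2) = q^(j*(j-1) div 2) * (q::real)^j"
  by (simp only: diff_Suc_1 C_Suc power_add)

definition F :: "real \<Rightarrow> real \<Rightarrow> nat \<Rightarrow> real" where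
  "F q x n = (\<Sum>k\<le>n. q^(k*(k-1) div 2) * x^k / (qfact q k * qfact q (n-k)))"

lemma F_step:
  assumes q: "q > 0"
  shows "qint q (Suc n) * F q x (Suc n) = (1 + x) * F q (q*x) n"
proof -
  define A where "A k = q^(k*(k-1) div 2) * x^k * qint q k / (qfact q k * qfact q (Suc n-k))" for k
  define B where "B k = q^(k*(k-1) div 2) * x^k * (q^k * qint q (Suc n - k)) / (qfact q k * qfact q (Suc n-k))" for k
  define T where "T k = q^(k*(k-1) div 2) * (q*x)^k / (qfact q k * qfact q (n-k))" for k
  have "qint q (Suc n) * F q x (Suc n) = (\<Sum>k\<le>Suc n. A k + B k)"
    unfolding F_def sum_distrib_left
  proof (rule sum.cong[OF refl])
    fix k assume "k \<in> {..Suc n}"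
    then have "qint q (Suc n) = qint q k + q ^ k * qint q (Suc n - k)"
      using qint_add[of q k "Suc n - k"] by simp
    then show "qint q (Suc n) * (q ^ (k * (k - 1) div 2) * x ^ k / (qfact q k * qfact q (Suc n - k))) = A k + B k"
      unfolding A_def B_def by (simp add: add_divide_distrib[symmetric] algebra_simps)
  qed
  also have "\<dots> = (\<Sum>k\<le>Suc n. A k) + (\<Sum>k\<le>Suc n. B k)" by (rule sum.distrib)
  also have "(\<Sum>k\<le>Suc n. A k) = (\<Sum>j\<le>n. x * T j)"
  proof -
    have "(\<Sum>k\<le>Suc n. A k) = A 0 + (\<Sum>j\<le>n. A (Suc j))" by (rule sum.atMost_Suc_shift)
    also have "A 0 = 0" by (simp add: A_def)
    also have "(\<Sum>j\<le>n. A (Suc j)) = (\<Sum>j\<le>n. x * T j)"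
    proof (rule sum.cong[OF refl])
      fix j assume "j \<in> {..n}"
      have p1: "qfact q j > 0" "qfact q (n - j) > 0" "qint q (Suc j) > 0" using q qfact_pos qint_pos by auto
      show "A (Suc j) = x * T j"
        unfolding A_def T_def C_pow using p1
        by (simp add: qfact_Suc C_Suc power_add power_mult_distrib field_simps)
    qed
    finally show ?thesis by simp
  qed
  also have "(\<Sum>k\<le>Suc n. B k) = (\<Sum>j\<le>n. T j)"
  proof -
    have "(\<Sum>k\<le>Suc n. B k) = (\<Sum>j\<le>n. B j) + B (Suc n)" by simp
    also have "B (Suc n) = 0" by (simp add: B_def)
    also have "(\<Sum>j\<le>n. B j) = (\<Sum>j\<le>n. T j)"
    proof (rule sum.cong[OF refl])
      fix j assume "j \<in> {..n}"
      then have sj: "Suc n - j = Suc (n - j)" by auto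
      have p1: "qfact q j > 0" "qfact q (n - j) > 0" "qint q (Suc (n-j)) > 0" using q qfact_pos qint_pos by auto
      show "B j = T j"
        unfolding B_def T_def sj using p1
        by (simp add: qfact_Suc power_mult_distrib field_simps)
    qed
    finally show ?thesis by simp
  qed
  finally have "qint q (Suc n) * F q x (Suc n) = (\<Sum>j\<le>n. x * T j) + (\<Sum>j\<le>n. T j)" .
  also have "\<dots> = (1 + x) * (\<Sum>j\<le>n. T j)" by (simp add: algebra_simps sum_distrib_left sum.distrib)
  also have "(\<Sum>j\<le>n. T j) = F q (q*x) n" unfolding F_def T_def by simp
  finally show ?thesis .
qed

lemma F_closed:
  assumes q: "q > 0"
  shows "qfact q n * F q x n = (\<Prod>j<n. 1 + q^j * x)"
proof (induction n arbitrary: x)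
  case 0 then show ?case by (simp add: F_def)
next
  case (Suc n)
  have "qfact q (Suc n) * F q x (Suc n) = qfact q n * (qint q (Suc n) * F q x (Suc n))"
    by (simp add: qfact_Suc)
  also have "\<dots> = (1 + x) * (qfact q n * F q (q*x) n)" using F_step[OF q] by simp
  also have "\<dots> = (1 + x) * (\<Prod>j<n. 1 + q^j * (q*x))" using Suc by simp
  also have "\<dots> = (\<Prod>j<Suc n. 1 + q^j * x)"
    unfolding prod.lessThan_Suc_shift by (simp add: mult.assoc mult.commute mult.left_commute)
  finally show ?case .
qed

lemma qbrace_alt: "qbrace q n = 2 * qint q n / (1 + q ^ (n - 1))"
  by (auto simp: qbrace_def qint_def)

lemma qbrace_fact_alt:
  "qbrace_fact q n = qfact q n * 2 ^ n / (\<Prod>j<n. 1 + q^j)"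
proof (induction n)
  case 0 then show ?case by (simp add: qbrace_fact_def)
next
  case (Suc n)
  have "qbrace_fact q (Suc n) = qbrace_fact q n * qbrace q (Suc n)"
    by (simp add: qbrace_fact_def prod.nat_ivl_Suc' mult.commute)
  then show ?case using Suc by (simp add: qbrace_alt qfact_Suc)
qed

lemma qint_inv: "q > 0 \<Longrightarrow> qint q (Suc k) = q ^ k * qint (1/q) (Suc k)"
proof (induction k)
  case 0 then show ?case by (simp add: qint_def)
next
  case (Suc k)
  have "qint q (Suc (Suc k)) = 1 + q * qint q (Suc k)" by (rule qint_Suc')
  also have "\<dots> = 1 + q * q^k * qint (1/q) (Suc k)" using Suc by simp
  also have "\<dots> = q ^ Suc k * qint (1/q) (Suc (Suc k))"
    using Suc.prems by (simp add: qint_Suc power_divide field_simps)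
  finally show ?case .
qed

lemma qfact_inv: "q > 0 \<Longrightarrow> qfact q n = q ^ (n*(n-1) div 2) * qfact (1/q) n"
proof (induction n)
  case 0 then show ?case by simp
next
  case (Suc n)
  have "qfact q (Suc n) = qfact q n * qint q (Suc n)" by (rule qfact_Suc)
  also have "\<dots> = q ^ (n*(n-1) div 2) * qfact (1/q) n * (q ^ n * qint (1/q) (Suc n))"
    using Suc by (simp only: qint_inv[OF Suc.prems, of n])
  also have "\<dots> = q ^ (Suc n * (Suc n - 1) div 2) * qfact (1/q) (Suc n)"
    by (simp only: C_pow qfact_Suc[of "1/q" n] mult_ac)
  finally show ?case .
qed

lemma norm_term: "q > 0 \<Longrightarrow> norm (w ^ n / complex_of_real (qfact q n)) = norm w ^ n / qfact q n"
  using qfact_pos[of q n] by (simp add: norm_divide norm_power)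

lemma e_summable:
  assumes q: "q > 0" and w: "q \<ge> 1 \<or> norm w * (1 - q) < 1"
  shows "summable (\<lambda>n. norm (w ^ n / complex_of_real (qfact q n)))"
proof -
  define f where "f n = norm w ^ n / qfact q n" for n
  have fS: "f (Suc n) = f n * (norm w / qint q (Suc n))" for n
    unfolding f_def using qfact_pos[OF q, of n] qint_pos[OF q, of "Suc n"]
    by (simp add: qfact_Suc field_simps)
  have f0: "f n \<ge> 0" for n unfolding f_def using qfact_pos[OF q, of n] by simp
  have key: "\<exists>c N. c < 1 \<and> (\<forall>n\<ge>N. norm w \<le> c * qint q (Suc n))"
  proof (cases "q \<ge> 1")
    case True
    define N where "N = nat (ceiling (2 * norm w))"
    have "\<forall>n\<ge>N. norm w \<le> 1/2 * qint q (Suc n)"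
    proof (intro allI impI)
      fix n assume "n \<ge> N"
      then have "2 * norm w \<le> real n" unfolding N_def by linarith
      moreover have "real (Suc n) \<le> qint q (Suc n)" by (rule qint_ge[OF True])
      ultimately show "norm w \<le> 1/2 * qint q (Suc n)" by simp
    qed
    then show ?thesis by (intro exI[of _ "1/2"]) auto
  next
    case False
    then have q1: "q < 1" by simp
    define r where "r = norm w * (1 - q)"
    have r: "r < 1" "r \<ge> 0" using w False q1 unfolding r_def by auto
    define c where "c = (1 + r) / 2"
    have c: "c < 1" "c > 0" "r < c" using r unfolding c_def by auto
    have "1 - r / c > 0" using c by (simp add: field_simps)
    then have "eventually (\<lambda>n. q ^ n < 1 - r / c) sequentially"
      using LIMSEQ_power_zero[of q] q q1 by (intro order_tendstoD(2)) auto
    then obtain N where N: "\<And>n. n \<ge> N \<Longrightarrow> q ^ n < 1 - r / c"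
      unfolding eventually_sequentially by blast
    have "\<forall>n\<ge>N. norm w \<le> c * qint q (Suc n)"
    proof (intro allI impI)
      fix n assume "n \<ge> N"
      then have "q ^ Suc n < 1 - r / c" using N[of "Suc n"] by simp
      then have "c * q ^ Suc n < c - r" using c by (simp add: field_simps)
      then have "r \<le> c * (1 - q ^ Suc n)" by (simp add: algebra_simps)
      then have "norm w * (1 - q) \<le> c * (1 - q ^ Suc n)" unfolding r_def .
      then show "norm w \<le> c * qint q (Suc n)"
        using q1 by (simp add: qint_geom field_simps)
    qed
    then show ?thesis using c by blast
  qed
  then obtain c N where c: "c < 1" and N: "\<And>n. n \<ge> N \<Longrightarrow> norm w \<le> c * qint q (Suc n)" by blast
  have "summable f"
  proof (rule summable_ratio_test[OF c])
    fix n assume "n \<ge> N"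
    then have "norm w / qint q (Suc n) \<le> c"
      using N qint_pos[OF q, of "Suc n"] by (simp add: divide_le_eq)
    then have "f n * (norm w / qint q (Suc n)) \<le> f n * c" using f0 by (intro mult_left_mono) auto
    then show "norm (f (Suc n)) \<le> c * norm (f n)" using f0 fS f0[of "Suc n"] by (simp add: mult.commute)
  qed
  then show ?thesis unfolding f_def using norm_term[OF q] by simp
qed

lemma E_summable:
  assumes q: "q > 0" and w: "q \<le> 1 \<or> norm w * (1 - 1/q) < 1"
  shows "summable (\<lambda>n. norm (complex_of_real (q ^ (n * (n - 1) div 2)) * w ^ n / complex_of_real (qfact q n)))"
proof -
  have q': "1/q > 0" using q by simp
  have "1/q \<ge> 1 \<or> norm w * (1 - 1/q) < 1" using w q by (auto simp: field_simps)
  from e_summable[OF q' this] show ?thesis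
  proof (rule summable_cong[THEN iffD1, rotated])
    show "\<forall>\<^sub>F n in sequentially. norm (w ^ n / complex_of_real (qfact (1/q) n)) =
       norm (complex_of_real (q ^ (n * (n - 1) div 2)) * w ^ n / complex_of_real (qfact q n))"
    proof (intro always_eventually allI)
      fix n
      have "qfact (1/q) n > 0" using qfact_pos[OF q'] by simp
      moreover have "q ^ (n * (n - 1) div 2) > 0" using q by simp
      ultimately show "norm (w ^ n / complex_of_real (qfact (1/q) n)) =
       norm (complex_of_real (q ^ (n * (n - 1) div 2)) * w ^ n / complex_of_real (qfact q n))"
        using q by (simp add: qfact_inv[OF q, of n] norm_divide norm_mult norm_power)
    qed
  qed
qed

lemma disc_open: "open (disc_q q)"
  unfolding disc_q_def by auto

lemma disc_conds:
  assumes q: "q > 0" and z: "z \<in> disc_q q"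
  shows "q \<ge> 1 \<or> norm (z/2) * (1 - q) < 1" "q \<le> 1 \<or> norm (z/2) * (1 - 1/q) < 1"
proof -
  show "q \<ge> 1 \<or> norm (z/2) * (1 - q) < 1"
  proof (cases "q < 1")
    case True
    then have "norm z < 2 / (1 - q)" using z by (auto simp: disc_q_def)
    then show ?thesis using True by (simp add: norm_divide field_simps)
  qed simp
  show "q \<le> 1 \<or> norm (z/2) * (1 - 1/q) < 1"
  proof (cases "q > 1")
    case True
    then have "norm z < 2 * q / (q - 1)" using z by (auto simp: disc_q_def)
    then show ?thesis using True by (simp add: norm_divide field_simps)
  qed simp
qed

lemma coeff_identity:
  assumes q: "q > 0"
  shows "(\<Sum>i\<le>k. q ^ ((k-i)*((k-i)-1) div 2) / (qfact q i * qfact q (k-i)))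
         = (\<Prod>j<k. 1 + q^j) / qfact q k"
proof -
  have "(\<Sum>i\<le>k. q ^ ((k-i)*((k-i)-1) div 2) / (qfact q i * qfact q (k-i)))
      = (\<Sum>i\<in>{0..k}. (\<lambda>j. q ^ (j*(j-1) div 2) / (qfact q (k-j) * qfact q j)) (k + 0 - i))"
  proof (rule sum.cong)
    show "{..k} = {0..k}" by auto
  next
    fix i assume "i \<in> {0..k}"
    then have "k - (k - i) = i" by auto
    then show "q ^ ((k-i)*((k-i)-1) div 2) / (qfact q i * qfact q (k-i))
      = (\<lambda>j. q ^ (j*(j-1) div 2) / (qfact q (k-j) * qfact q j)) (k + 0 - i)" by simp
  qed
  also have "\<dots> = (\<Sum>j\<in>{0..k}. q ^ (j*(j-1) div 2) / (qfact q (k-j) * qfact q j))"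
    by (rule sum.atLeastAtMost_rev[symmetric])
  also have "\<dots> = F q 1 k" unfolding F_def by (intro sum.cong) (auto simp: mult.commute)
  also have "\<dots> = (\<Prod>j<k. 1 + q^j) / qfact q k"
    using F_closed[OF q, of k 1] qfact_pos[OF q, of k] by (simp add: field_simps)
  finally show ?thesis .
qed

lemma prod_pos: "q > 0 \<Longrightarrow> (\<Prod>j<k. 1 + q^j) > (0::real)"
  by (intro prod_pos) (auto simp: add_pos_pos)

lemma main_sums:
  assumes q: "q > 0" and z: "z \<in> disc_q q"
  shows "(\<lambda>n. z ^ n / complex_of_real (qbrace_fact q n)) sums impexp q z"
proof -
  define w where "w = z / 2"
  define a where "a n = w ^ n / complex_of_real (qfact q n)" for n
  define b where "b n = complex_of_real (q ^ (n * (n - 1) div 2)) * w ^ n / complex_of_real (qfact q n)" for n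
  have sa: "summable (\<lambda>n. norm (a n))" unfolding a_def w_def
    by (rule e_summable[OF q disc_conds(1)[OF q z]])
  have sb: "summable (\<lambda>n. norm (b n))" unfolding b_def w_def
    by (rule E_summable[OF q disc_conds(2)[OF q z]])
  have "(\<lambda>k. \<Sum>i\<le>k. a i * b (k - i)) sums ((\<Sum>k. a k) * (\<Sum>k. b k))"
    by (rule Cauchy_product_sums[OF sa sb])
  also have "(\<Sum>k. a k) * (\<Sum>k. b k) = impexp q z"
    unfolding impexp_def e_q_def E_q_def a_def b_def w_def ..
  finally have S: "(\<lambda>k. \<Sum>i\<le>k. a i * b (k - i)) sums impexp q z" .
  have T: "(\<Sum>i\<le>k. a i * b (k - i)) = z ^ k / complex_of_real (qbrace_fact q k)" for k
  proof -
    have "(\<Sum>i\<le>k. a i * b (k - i)) = (\<Sum>i\<le>k. w ^ k * complex_of_real (q ^ ((k-i)*((k-i)-1) div 2) / (qfact q i * qfact q (k-i))))"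
    proof (rule sum.cong[OF refl])
      fix i assume "i \<in> {..k}"
      then have "w ^ k = w ^ i * w ^ (k - i)" by (simp add: power_add[symmetric])
      then show "a i * b (k - i) = w ^ k * complex_of_real (q ^ ((k-i)*((k-i)-1) div 2) / (qfact q i * qfact q (k-i)))"
        unfolding a_def b_def by (simp add: field_simps)
    qed
    also have "\<dots> = w ^ k * complex_of_real (\<Sum>i\<le>k. q ^ ((k-i)*((k-i)-1) div 2) / (qfact q i * qfact q (k-i)))"
      by (simp add: sum_distrib_left)
    also have "\<dots> = w ^ k * complex_of_real ((\<Prod>j<k. 1 + q^j) / qfact q k)"
      by (simp only: coeff_identity[OF q])
    also have "\<dots> = z ^ k / complex_of_real (qbrace_fact q k)"
    proof -
      have p: "(\<Prod>j<k. 1 + q^j) > 0" "qfact q k > 0" using prod_pos[OF q] qfact_pos[OF q] by auto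
      have "complex_of_real (qbrace_fact q k) = complex_of_real (qfact q k) * 2 ^ k / complex_of_real (\<Prod>j<k. 1 + q^j)"
        by (simp add: qbrace_fact_alt)
      then show ?thesis unfolding w_def using p by (simp add: power_divide field_simps)
    qed
    finally show ?thesis .
  qed
  show ?thesis using S unfolding T .
qed

theorem theorem1:
  fixes q :: real
  assumes "q > 0"
  shows "impexp q analytic_on disc_q q \<and>
         (\<forall>z \<in> disc_q q. (\<lambda>n. z ^ n / complex_of_real (qbrace_fact q n)) sums impexp q z)"
proof
  have S: "\<forall>z \<in> disc_q q. (\<lambda>n. z ^ n / complex_of_real (qbrace_fact q n)) sums impexp q z"
    using main_sums[OF assms] by blast
  then show "\<forall>z \<in> disc_q q. (\<lambda>n. z ^ n / complex_of_real (qbrace_fact q n)) sums impexp q z" .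
  define c where "c n = 1 / complex_of_real (qbrace_fact q n)" for n
  define g where "g z = (\<Sum>n. c n * z ^ n)" for z
  have sm: "summable (\<lambda>n. c n * z ^ n)" and eq: "impexp q z = g z" if "z \<in> disc_q q" for z
  proof -
    have "(\<lambda>n. c n * z ^ n) sums impexp q z" using S that unfolding c_def by simp
    then show "summable (\<lambda>n. c n * z ^ n)" "impexp q z = g z"
      unfolding g_def by (auto simp: sums_iff)
  qed
  have "g holomorphic_on disc_q q"
    unfolding holomorphic_on_def
  proof
    fix z assume z: "z \<in> disc_q q"
    have "(g has_field_derivative (\<Sum>n. diffs c n * z^n)) (at z)"
    proof (cases "q = 1")
      case True
      then have "\<And>y. summable (\<lambda>n. c n * y ^ n)" using sm by (simp add: disc_q_def)
      then show ?thesis unfolding g_def by (rule termdiffs_strong_converges_everywhere)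
    next
      case False
      then obtain K where K: "disc_q q = ball 0 K"
        by (cases "q < 1") (auto simp: disc_q_def)
      show ?thesis unfolding g_def
      proof (rule termdiffs_strong')
        show "\<And>y. norm y < K \<Longrightarrow> summable (\<lambda>n. c n * y ^ n)" using sm K by auto
        show "norm z < K" using z K by auto
      qed
    qed
    then show "g field_differentiable at z within disc_q q"
      unfolding field_differentiable_def by (blast intro: has_field_derivative_at_within)
  qed
  then have "impexp q holomorphic_on disc_q q" by (rule holomorphic_transform) (simp add: eq)
  then show "impexp q analytic_on disc_q q" by (simp add: analytic_on_open disc_open)
qed

end
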